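(* Let $n>0$ and let $\mathbf{s},\hat{\mathbf{s}}\in\mathbb{R}_{\ge0}^{G_\Delta}$ be such that $\|\mathbf{s}\|_1=n$ and $\|\mathbf{s}-\hat{\mathbf{s}}\|_{\mathrm{EMD}}\le n/2$. Let $\mathbf{a}=\mathbf{s}/\|\mathbf{s}\|_1$ and $\hat{\mathbf{a}}=\hat{\mathbf{s}}/\|\hat{\mathbf{s}}\|_1$. Then $\|\mathbf{a}-\hat{\mathbf{a}}\|_{\mathrm{EMD}}\le 4\|\mathbf{s}-\hat{\mathbf{s}}\|_{\mathrm{EMD}}/n$.
   Context: For $\Delta=2^\ell$, $G_\Delta=\{(i/\Delta,j/\Delta): i,j\in\{0,\dots,\Delta-1\}\}$. For $\mathbf{p},\mathbf{q}\in\mathbb{R}_{\ge0}^{G_\Delta}$ with $\|\mathbf{p}\|_1=\|\mathbf{q}\|_1$, $\mathrm{EMD}(\mathbf{p},\mathbf{q})=\min_\gamma\sum_{x,y\in G_\Delta}\gamma(x,y)\|x-y\|_1$ over $\gamma\in\mathbb{R}_{\ge0}^{G_\Delta\times G_\Delta}$ with marginals $\mathbf{p},\mathbf{q}$. The EMD norm of $\mathbf{w}\in\mathbb{R}^{G_\Delta}$ is $\|\mathbf{w}\|_{\mathrm{EMD}}=\min\{\mathrm{EMD}(\mathbf{p},\mathbf{q})+2\|\mathbf{r}\|_1\}$, the minimum over $\mathbf{p},\mathbf{q}\in\mathbb{R}_{\ge0}^{G_\Delta}$ and $\mathbf{r}\in\mathbb{R}^{G_\Delta}$ with $\mathbf{p}-\mathbf{q}+\mathbf{r}=\mathbf{w}$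 and $\|\mathbf{p}\|_1=\|\mathbf{q}\|_1$. *)

theory Defs
  imports Complex_Main
begin

text \<open>The grid G_Delta for Delta = 2^l, as a finite set of points in the plane.\<close>
definition grid :: "nat \<Rightarrow> (real \<times> real) set" where
  "grid l = {(real i / 2 ^ l, real j / 2 ^ l) | i j. i < 2 ^ l \<and> j < 2 ^ l}"

definition l1dist :: "real \<times> real \<Rightarrow> real \<times> real \<Rightarrow> real" where
  "l1dist x y = \<bar>fst x - fst y\<bar> + \<bar>snd x - snd y\<bar>"

text \<open>Vectors in R^G are functions; only their values on G matter.
  Transport plans gamma with marginals p and q on G.\<close>
definition couplings :: "(real \<times> real) set \<Rightarrow> (real \<times> real \<Rightarrow> real) \<Rightarrow> (real \<times> real \<Rightarrow> real)
    \<Rightarrow> ((real \<times> real) \<times> (real \<times> real) \<Rightarrow> real) set" where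
  "couplings G p q = {\<gamma>. (\<forall>x\<in>G. \<forall>y\<in>G. \<gamma> (x, y) \<ge> 0) \<and>
      (\<forall>x\<in>G. (\<Sum>y\<in>G. \<gamma> (x, y)) = p x) \<and> (\<forall>y\<in>G. (\<Sum>x\<in>G. \<gamma> (x, y)) = q y)}"

definition emd :: "(real \<times> real) set \<Rightarrow> (real \<times> real \<Rightarrow> real) \<Rightarrow> (real \<times> real \<Rightarrow> real) \<Rightarrow> real" where
  "emd G p q = Inf {(\<Sum>x\<in>G. \<Sum>y\<in>G. \<gamma> (x, y) * l1dist x y) | \<gamma>. \<gamma> \<in> couplings G p q}"

definition emd_norm :: "(real \<times> real) set \<Rightarrow> (real \<times> real \<Rightarrow> real) \<Rightarrow> real" where
  "emd_norm G w = Inf {emd G p q + 2 * (\<Sum>x\<in>G. \<bar>r x\<bar>) | p q r.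
      (\<forall>x\<in>G. p x \<ge> 0 \<and> q x \<ge> 0) \<and> (\<Sum>x\<in>G. p x) = (\<Sum>x\<in>G. q x) \<and>
      (\<forall>x\<in>G. p x - q x + r x = w x)}"

end

theory Submission
  imports Defs
begin

lemma finite_grid: "finite (grid l)"
proof -
  have "grid l = (\<lambda>(i,j). (real i / 2 ^ l, real j / 2 ^ l)) ` ({..<(2::nat)^l} \<times> {..<(2::nat)^l})"
    unfolding grid_def by auto
  then show ?thesis by simp
qed

lemma coupling_exists:
  assumes G: "finite G" and nn: "\<forall>x\<in>G. p x \<ge> 0 \<and> q x \<ge> 0" and eq: "(\<Sum>x\<in>G. p x) = (\<Sum>x\<in>G. q x)"
  shows "couplings G p q \<noteq> {}"
proof (cases "(\<Sum>x\<in>G. p x) = 0")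
  case True
  then have p0: "\<forall>x\<in>G. p x = 0" using sum_nonneg_eq_0_iff[OF G] nn by blast
  from True eq have q0: "\<forall>x\<in>G. q x = 0" using sum_nonneg_eq_0_iff[OF G] nn by metis
  have "(\<lambda>_. 0) \<in> couplings G p q" unfolding couplings_def using p0 q0 by auto
  then show ?thesis by blast
next
  case False
  define S where "S = (\<Sum>x\<in>G. p x)"
  have "(\<lambda>(x,y). p x * q y / S) \<in> couplings G p q"
    unfolding couplings_def
  proof (intro CollectI conjI ballI)
    fix x y assume "x \<in> G" "y \<in> G"
    then show "0 \<le> (case (x, y) of (x, y) \<Rightarrow> p x * q y / S)"
      using nn S_def sum_nonneg[of G p] by auto
  next
    fix x assume "x \<in> G"
    have "(\<Sum>y\<in>G. p x * q y / S) = p x * (\<Sum>y\<in>G. q y) / S"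
      by (simp add: sum_distrib_left sum_divide_distrib)
    also have "\<dots> = p x" using False eq S_def by simp
    finally show "(\<Sum>y\<in>G. case (x, y) of (x, y) \<Rightarrow> p x * q y / S) = p x" by simp
  next
    fix y assume "y \<in> G"
    have "(\<Sum>x\<in>G. p x * q y / S) = (\<Sum>x\<in>G. p x) * q y / S"
      by (simp add: sum_distrib_right sum_divide_distrib)
    also have "\<dots> = q y" using False eq S_def by simp
    finally show "(\<Sum>x\<in>G. case (x, y) of (x, y) \<Rightarrow> p x * q y / S) = q y" by simp
  qed
  then show ?thesis by blast
qed

lemma cost_nonneg:
  assumes "\<gamma> \<in> couplings G p q"
  shows "(\<Sum>x\<in>G. \<Sum>y\<in>G. \<gamma> (x, y) * l1dist x y) \<ge> 0"
  using assms unfolding couplings_def l1dist_def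
  by (auto intro!: sum_nonneg mult_nonneg_nonneg)

lemma emd_nonneg:
  assumes "couplings G p q \<noteq> {}"
  shows "emd G p q \<ge> 0"
  unfolding emd_def using assms cost_nonneg
  by (auto intro!: cInf_greatest)

lemma emd_scale:
  assumes ne: "couplings G p q \<noteq> {}" and c: "c > 0"
  shows "emd G (\<lambda>x. p x / c) (\<lambda>x. q x / c) \<le> emd G p q / c"
proof -
  let ?C = "{(\<Sum>x\<in>G. \<Sum>y\<in>G. \<gamma> (x, y) * l1dist x y) | \<gamma>. \<gamma> \<in> couplings G (\<lambda>x. p x / c) (\<lambda>x. q x / c)}"
  have bdd: "bdd_below ?C" using cost_nonneg by (auto intro!: bdd_belowI[where m=0])
  have "c * emd G (\<lambda>x. p x / c) (\<lambda>x. q x / c) \<le> emd G p q"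
    unfolding emd_def[of G p q]
  proof (rule cInf_greatest)
    show "{(\<Sum>x\<in>G. \<Sum>y\<in>G. \<gamma> (x, y) * l1dist x y) | \<gamma>. \<gamma> \<in> couplings G p q} \<noteq> {}" using ne by auto
  next
    fix V assume "V \<in> {(\<Sum>x\<in>G. \<Sum>y\<in>G. \<gamma> (x, y) * l1dist x y) | \<gamma>. \<gamma> \<in> couplings G p q}"
    then obtain \<gamma> where V: "V = (\<Sum>x\<in>G. \<Sum>y\<in>G. \<gamma> (x, y) * l1dist x y)" and g: "\<gamma> \<in> couplings G p q" by blast
    have g': "(\<lambda>z. \<gamma> z / c) \<in> couplings G (\<lambda>x. p x / c) (\<lambda>x. q x / c)"
      using g c unfolding couplings_def by (auto simp: sum_divide_distrib[symmetric])
    have "emd G (\<lambda>x. p x / c) (\<lambda>x. q x / c) \<le> (\<Sum>x\<in>G. \<Sum>y\<in>G. \<gamma> (x, y) / c * l1dist x y)"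
      unfolding emd_def
    proof (rule cInf_lower[OF _ bdd], intro CollectI exI conjI)
      show "(\<lambda>z. \<gamma> z / c) \<in> couplings G (\<lambda>x. p x / c) (\<lambda>x. q x / c)" by (rule g')
    qed simp
    also have "\<dots> = V / c" unfolding V by (simp add: sum_divide_distrib)
    finally show "c * emd G (\<lambda>x. p x / c) (\<lambda>x. q x / c) \<le> V" using c by (simp add: field_simps)
  qed
  then show ?thesis using c by (simp add: field_simps)
qed

definition Sset :: "(real \<times> real) set \<Rightarrow> (real \<times> real \<Rightarrow> real) \<Rightarrow> real set" where
  "Sset G w = {emd G p q + 2 * (\<Sum>x\<in>G. \<bar>r x\<bar>) | p q r.
      (\<forall>x\<in>G. p x \<ge> 0 \<and> q x \<ge> 0) \<and> (\<Sum>x\<in>G. p x) = (\<Sum>x\<in>G. q x) \<and>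
      (\<forall>x\<in>G. p x - q x + r x = w x)}"

lemma emd_norm_Sset: "emd_norm G w = Inf (Sset G w)"
  unfolding emd_norm_def Sset_def by simp

lemma Sset_ne: assumes "finite G" shows "Sset G w \<noteq> {}"
proof -
  have "emd G (\<lambda>_. 0) (\<lambda>_. 0) + 2 * (\<Sum>x\<in>G. \<bar>w x\<bar>) \<in> Sset G w"
    unfolding Sset_def by (intro CollectI exI[of _ "\<lambda>_. 0"] exI[of _ w] conjI) auto
  then show ?thesis by blast
qed

lemma Sset_lower:
  assumes G: "finite G" and V: "V \<in> Sset G w"
  shows "V \<ge> 2 * \<bar>\<Sum>x\<in>G. w x\<bar>"
proof -
  obtain p q r where V: "V = emd G p q + 2 * (\<Sum>x\<in>G. \<bar>r x\<bar>)" and nn: "\<forall>x\<in>G. p x \<ge> 0 \<and> q x \<ge> 0"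
    and eq: "(\<Sum>x\<in>G. p x) = (\<Sum>x\<in>G. q x)" and w: "\<forall>x\<in>G. p x - q x + r x = w x"
    using V unfolding Sset_def by blast
  have "emd G p q \<ge> 0" by (rule emd_nonneg[OF coupling_exists[OF G nn eq]])
  have "(\<Sum>x\<in>G. w x) = (\<Sum>x\<in>G. p x - q x + r x)" using w by simp
  also have "\<dots> = (\<Sum>x\<in>G. r x)" using eq by (simp add: sum.distrib sum_subtractf)
  finally have "\<bar>\<Sum>x\<in>G. w x\<bar> \<le> (\<Sum>x\<in>G. \<bar>r x\<bar>)" using sum_abs[of r G] by simp
  then show ?thesis using V \<open>emd G p q \<ge> 0\<close> by simp
qed

lemma Sset_bdd: assumes "finite G" shows "bdd_below (Sset G w)"
  using Sset_lower[OF assms] by (meson abs_ge_zero bdd_belowI mult_nonneg_nonneg order_trans zero_le_numeral)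

lemma emd_norm_lower: assumes "finite G" shows "emd_norm G w \<ge> 2 * \<bar>\<Sum>x\<in>G. w x\<bar>"
  unfolding emd_norm_Sset using Sset_lower[OF assms] Sset_ne[OF assms] by (auto intro!: cInf_greatest)

lemma mpos_aux: fixes n m E :: real assumes "2 * \<bar>n - m\<bar> \<le> E" "E \<le> n/2" "0 < n" shows "0 < m"
proof -
  have "n - m \<le> \<bar>n - m\<bar>" by simp
  then have "2 * (n - m) \<le> 2 * \<bar>n - m\<bar>" by (rule mult_left_mono) simp
  also have "\<dots> \<le> n/2" using assms by simp
  finally have "2 * (n - m) \<le> n/2" .
  then show ?thesis using assms(3) by (simp add: field_simps)
qed

theorem lemma1:
  fixes l :: nat and n :: real and s sh :: "real \<times> real \<Rightarrow> real"
  assumes "n > 0"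
    and "\<forall>x\<in>grid l. s x \<ge> 0" and "\<forall>x\<in>grid l. sh x \<ge> 0"
    and "(\<Sum>x\<in>grid l. \<bar>s x\<bar>) = n"
    and "emd_norm (grid l) (\<lambda>x. s x - sh x) \<le> n / 2"
  shows "emd_norm (grid l)
           (\<lambda>x. s x / (\<Sum>y\<in>grid l. \<bar>s y\<bar>) - sh x / (\<Sum>y\<in>grid l. \<bar>sh y\<bar>))
         \<le> 4 * emd_norm (grid l) (\<lambda>x. s x - sh x) / n"
proof -
  define G where "G = grid l"
  have G: "finite G" unfolding G_def by (rule finite_grid)
  define m where "m = (\<Sum>y\<in>G. \<bar>sh y\<bar>)"
  define E where "E = emd_norm G (\<lambda>x. s x - sh x)"
  have sn: "(\<Sum>y\<in>G. \<bar>s y\<bar>) = n" using assms(4) G_def by simp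
  have s1: "(\<Sum>y\<in>G. s y) = n" using sn assms(2) G_def by simp
  have m1: "(\<Sum>y\<in>G. sh y) = m" using m_def assms(3) G_def by simp
  have En: "E \<le> n/2" using assms(5) E_def G_def by simp
  have "E \<ge> 2 * \<bar>\<Sum>x\<in>G. s x - sh x\<bar>" unfolding E_def by (rule emd_norm_lower[OF G])
  then have Em: "E \<ge> 2 * \<bar>n - m\<bar>" using s1 m1 by (simp add: sum_subtractf)
  have mpos: "m > 0" by (rule mpos_aux[OF Em En \<open>n > 0\<close>])
  have E0: "E \<ge> 0" using Em by (meson abs_ge_zero order_trans mult_nonneg_nonneg zero_le_numeral)
  define c where "c = 1/n - 1/m"
  have cm0: "c * m = (m - n) / n" unfolding c_def using mpos \<open>n>0\<close> by (simp add: field_simps)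
  have "\<bar>c\<bar> * m = \<bar>c * m\<bar>" using mpos by (simp add: abs_mult)
  also have "\<dots> = \<bar>m - n\<bar> / n" unfolding cm0 using \<open>n>0\<close> by simp
  finally have cm: "\<bar>c\<bar> * m = \<bar>n - m\<bar> / n" by (simp add: abs_minus_commute)
  define F where "F = emd_norm G (\<lambda>x. s x / n - sh x / m)"
  have key: "n * F - E \<le> V" if V: "V \<in> Sset G (\<lambda>x. s x - sh x)" for V
  proof -
    obtain p q r where V: "V = emd G p q + 2 * (\<Sum>x\<in>G. \<bar>r x\<bar>)" and nn: "\<forall>x\<in>G. p x \<ge> 0 \<and> q x \<ge> 0"
      and eq: "(\<Sum>x\<in>G. p x) = (\<Sum>x\<in>G. q x)" and w: "\<forall>x\<in>G. p x - q x + r x = s x - sh x"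
      using V unfolding Sset_def by blast
    define r' where "r' = (\<lambda>x. r x / n + c * sh x)"
    have mem: "emd G (\<lambda>x. p x / n) (\<lambda>x. q x / n) + 2 * (\<Sum>x\<in>G. \<bar>r' x\<bar>) \<in> Sset G (\<lambda>x. s x / n - sh x / m)"
      unfolding Sset_def
    proof (intro CollectI exI conjI)
      show "\<forall>x\<in>G. 0 \<le> p x / n \<and> 0 \<le> q x / n" using nn \<open>n>0\<close> by auto
      show "(\<Sum>x\<in>G. p x / n) = (\<Sum>x\<in>G. q x / n)" using eq by (simp add: sum_divide_distrib[symmetric])
      show "\<forall>x\<in>G. p x / n - q x / n + r' x = s x / n - sh x / m"
      proof
        fix x assume "x \<in> G"
        then have "p x - q x + r x = s x - sh x" using w by auto
        then have rx: "r x = s x - sh x - p x + q x" by linarith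
        show "p x / n - q x / n + r' x = s x / n - sh x / m"
          unfolding r'_def c_def rx using \<open>n>0\<close> mpos by (simp add: field_simps)
      qed
    qed (rule refl)
    have "F \<le> emd G (\<lambda>x. p x / n) (\<lambda>x. q x / n) + 2 * (\<Sum>x\<in>G. \<bar>r' x\<bar>)"
      unfolding F_def emd_norm_Sset by (rule cInf_lower[OF mem Sset_bdd[OF G]])
    also have "\<dots> \<le> emd G p q / n + 2 * ((\<Sum>x\<in>G. \<bar>r x\<bar>) / n + \<bar>c\<bar> * m)"
    proof (rule add_mono)
      show "emd G (\<lambda>x. p x / n) (\<lambda>x. q x / n) \<le> emd G p q / n"
        by (rule emd_scale[OF coupling_exists[OF G nn eq] \<open>n>0\<close>])
      have "(\<Sum>x\<in>G. \<bar>r' x\<bar>) \<le> (\<Sum>x\<in>G. \<bar>r x\<bar> / n + \<bar>c\<bar> * sh x)"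
        unfolding r'_def
      proof (rule sum_mono)
        fix x assume "x \<in> G"
        then have "sh x \<ge> 0" using assms(3) G_def by auto
        then show "\<bar>r x / n + c * sh x\<bar> \<le> \<bar>r x\<bar> / n + \<bar>c\<bar> * sh x"
          using \<open>n>0\<close> abs_triangle_ineq[of "r x / n" "c * sh x"] by (simp add: abs_mult)
      qed
      also have "\<dots> = (\<Sum>x\<in>G. \<bar>r x\<bar>) / n + \<bar>c\<bar> * m"
        using m1 by (simp add: sum.distrib sum_divide_distrib sum_distrib_left[symmetric])
      finally show "2 * (\<Sum>x\<in>G. \<bar>r' x\<bar>) \<le> 2 * ((\<Sum>x\<in>G. \<bar>r x\<bar>) / n + \<bar>c\<bar> * m)" by simp
    qed
    also have "\<dots> = V / n + 2 * \<bar>n - m\<bar> / n" unfolding V cm by (simp add: add_divide_distrib)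
    also have "\<dots> \<le> V / n + E / n" using Em \<open>n>0\<close> by (simp add: divide_right_mono)
    finally have "F \<le> V / n + E / n" .
    then show ?thesis using \<open>n>0\<close> by (simp add: field_simps)
  qed
  have "n * F - E \<le> E" unfolding E_def emd_norm_Sset
    by (rule cInf_greatest[OF Sset_ne[OF G]]) (use key E_def emd_norm_Sset in auto)
  then have "F \<le> 2 * E / n" using \<open>n>0\<close> by (simp add: field_simps)
  also have "\<dots> \<le> 4 * E / n" using E0 \<open>n>0\<close> by (simp add: divide_right_mono)
  finally show ?thesis unfolding F_def E_def G_def m_def using sn[unfolded G_def] by simp
qed

end
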